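(* Let $B \in C^\infty(\mathbb{R}^3;\mathbb{R}^3)$ and $\Psi \in C^\infty(\mathbb{R}^3;\mathbb{R}^{3\times 3})$ satisfy $\nabla \cdot \Psi = B$ and \[ \bigg( \frac{1}{|B(r)|} \int_{B(r)} \big|\Psi - \Psi_{B(r)}\big|^s \,\mathrm{d}x \bigg)^{\frac 1s} \leq C r^{\frac 13 - \frac 1s}, \qquad r > 1, \] for some $3 < s \leq 6$. Let $R > 1$ and let $\varphi \in C^\infty_c(B(R))$ satisfy $0 \leq \varphi \leq 1$, $\|\varphi\|_{L^1(B(R))} \geq c|B(R)|$, and $|\nabla \varphi| \leq C/R$ for some constants $c > 0$, $C > 0$. Then \[ |B_{\varphi}| \leq \frac{C}{c} R^{-\frac 23 - \frac 1s}, \] where $C$ on the right-hand side is a constant depending only on the constants in the hypotheses.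
   Context: Here $B(r)$ denotes the ball of radius $r$ centered at the origin in $\mathbb{R}^3$. For $f \in L^1_{loc}(\mathbb{R}^3)$, a measurable set $E$, and a cut-off function $\varphi \in C^\infty_c(\mathbb{R}^3)$ with $0 \le \varphi \le 1$, the averages are defined by $f_E := \frac{1}{|E|}\int_E f\,\mathrm{d}x$ and $f_\varphi := \big(\int_{\mathbb{R}^3} \varphi\,\mathrm{d}x\big)^{-1} \int_{\mathbb{R}^3} f\varphi\,\mathrm{d}x$. $\Psi$ is a potential for $B$, i.e. $\mathrm{div}\,\Psi = B$. *)

theory Defs
  imports "HOL-Analysis.Analysis"
begin

definition partial :: "3 \<Rightarrow> (real^3 \<Rightarrow> real) \<Rightarrow> real^3 \<Rightarrow> real" where
  "partial i f x = frechet_derivative f (at x) (axis i 1)"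

definition grad :: "(real^3 \<Rightarrow> real) \<Rightarrow> real^3 \<Rightarrow> real^3" where
  "grad f x = (\<chi> i. partial i f x)"

fun Ck :: "nat \<Rightarrow> (real^3 \<Rightarrow> real) \<Rightarrow> bool" where
  "Ck 0 f = continuous_on UNIV f"
| "Ck (Suc k) f = ((\<forall>x. f differentiable (at x)) \<and> (\<forall>i. Ck k (partial i f)))"

definition smooth :: "(real^3 \<Rightarrow> real) \<Rightarrow> bool" where
  "smooth f \<longleftrightarrow> (\<forall>k. Ck k f)"

definition smooth_vf :: "(real^3 \<Rightarrow> real^3) \<Rightarrow> bool" where
  "smooth_vf F \<longleftrightarrow> (\<forall>i. smooth (\<lambda>x. F x $ i))"

definition smooth_mf :: "(real^3 \<Rightarrow> real^3^3) \<Rightarrow> bool" where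
  "smooth_mf F \<longleftrightarrow> (\<forall>i j. smooth (\<lambda>x. F x $ i $ j))"

definition mdiv :: "(real^3 \<Rightarrow> real^3^3) \<Rightarrow> real^3 \<Rightarrow> real^3" where
  "mdiv F x = (\<chi> i. \<Sum>j\<in>UNIV. partial j (\<lambda>y. F y $ i $ j) x)"

definition avg :: "(real^3) set \<Rightarrow> (real^3 \<Rightarrow> 'a::euclidean_space) \<Rightarrow> 'a" where
  "avg E f = (1 / measure lebesgue E) *\<^sub>R integral E f"

definition wavg :: "(real^3 \<Rightarrow> real) \<Rightarrow> (real^3 \<Rightarrow> 'a::euclidean_space) \<Rightarrow> 'a" where
  "wavg \<phi> f = (1 / integral UNIV \<phi>) *\<^sub>R integral UNIV (\<lambda>x. \<phi> x *\<^sub>R f x)"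

end

theory Submission
  imports Defs
begin

lemma cball_sub_cbox: "cball (0::'a::euclidean_space) r \<subseteq> cbox (-(r *\<^sub>R One)) (r *\<^sub>R One)"
proof
  fix x :: 'a assume "x \<in> cball 0 r"
  hence n: "norm x \<le> r" by simp
  show "x \<in> cbox (-(r *\<^sub>R One)) (r *\<^sub>R One)"
    unfolding mem_box
  proof (intro ballI conjI)
    fix i :: 'a assume i: "i \<in> Basis"
    have "\<bar>x \<bullet> i\<bar> \<le> norm x" using Basis_le_norm[OF i] .
    thus "(-(r *\<^sub>R One)) \<bullet> i \<le> x \<bullet> i" "x \<bullet> i \<le> (r *\<^sub>R One) \<bullet> i"
      using n i by (auto simp: inner_simps)
  qed
qed

lemma cont_integrable_bounded:
  fixes f :: "'a::euclidean_space \<Rightarrow> 'b::euclidean_space"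
  assumes "continuous_on UNIV f" "S \<in> sets lebesgue" "S \<subseteq> cball 0 r"
  shows "f absolutely_integrable_on S" "f integrable_on S"
proof -
  have "f absolutely_integrable_on cbox (-(r *\<^sub>R One)) (r *\<^sub>R One)"
    by (rule absolutely_integrable_continuous) (rule continuous_on_subset[OF assms(1)], simp)
  moreover have "S \<subseteq> cbox (-(r *\<^sub>R One)) (r *\<^sub>R One)" using assms(3) cball_sub_cbox by blast
  ultimately show *: "f absolutely_integrable_on S"
    using set_integrable_subset assms(2) by blast
  thus "f integrable_on S" using absolutely_integrable_on_def by blast
qed

lemma cont_support:
  fixes f :: "'a::euclidean_space \<Rightarrow> 'b::euclidean_space"
  assumes "continuous_on UNIV f" "\<And>x. norm x > r \<Longrightarrow> f x = 0"
  shows "f integrable_on UNIV" "integral UNIV f = integral (cball 0 r) f"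
proof -
  have "cball (0::'a) r \<in> sets lebesgue" by simp
  hence "f integrable_on cball 0 r" using cont_integrable_bounded(2)[OF assms(1)] by blast
  hence h: "(f has_integral integral (cball 0 r) f) UNIV"
    by (rule has_integral_on_superset[OF integrable_integral]) (use assms(2) in auto)
  thus "f integrable_on UNIV" "integral UNIV f = integral (cball 0 r) f"
    by (auto simp: integrable_on_def integral_unique)
qed

lemma transl_integral:
  fixes f :: "'a::euclidean_space \<Rightarrow> real"
  assumes "continuous_on UNIV f" "\<And>x. norm x > r \<Longrightarrow> f x = 0"
  shows "integral UNIV (\<lambda>x. f (x + c)) = integral UNIV f"
proof -
  define Q where "Q = cbox (-(r *\<^sub>R One)) (r *\<^sub>R One :: 'a)"
  have fz: "f x = 0" if "x \<notin> Q" for x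
  proof -
    have "x \<notin> cball 0 r" using that cball_sub_cbox[of r] unfolding Q_def by blast
    thus ?thesis using assms(2) by simp
  qed
  have fi: "f integrable_on Q" unfolding Q_def
    by (rule integrable_continuous) (rule continuous_on_subset[OF assms(1)], simp)
  have u: "integral UNIV f = integral Q f"
    using has_integral_on_superset[OF integrable_integral[OF fi], of UNIV] fz
    by (auto intro: integral_unique)
  define a where "a = -(r *\<^sub>R One) - c"
  define b where "b = (r *\<^sub>R One) - c"
  have Qab: "Q = cbox (a + c) (b + c)" unfolding Q_def a_def b_def by simp
  have "((f \<circ> (+) c) has_integral integral Q f) (cbox a b)"
    using has_integral_shift_cbox_iff[of f c "integral Q f" a b] integrable_integral[OF fi] Qab by simp
  moreover have "(f \<circ> (+) c) x = 0" if "x \<notin> cbox a b" for x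
  proof -
    have Q2: "Q = (\<lambda>x. c + x) ` cbox a b" unfolding Qab cbox_translation[symmetric] by (simp add: add.commute)
    have "c + x \<notin> Q" unfolding Q2 using that by auto
    thus ?thesis using fz by simp
  qed
  ultimately have "((f \<circ> (+) c) has_integral integral Q f) UNIV"
    using has_integral_on_superset by blast
  moreover have "(f \<circ> (+) c) = (\<lambda>x. f (x + c))" by (rule ext) (simp add: add.commute)
  ultimately have "integral UNIV (\<lambda>x. f (x + c)) = integral Q f"
    using integral_unique by metis
  thus ?thesis using u by simp
qed

lemma smooth_Suc: "smooth f \<Longrightarrow> smooth (partial i f)"
proof -
  assume a: "smooth f"
  show ?thesis unfolding smooth_def
  proof
    fix k
    have "Ck (Suc k) f" using a unfolding smooth_def by blast
    thus "Ck k (partial i f)" by simp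
  qed
qed
lemma smooth_diff: "smooth f \<Longrightarrow> f differentiable (at x)"
proof -
  assume a: "smooth f"
  have "Ck (Suc 0) f" using a unfolding smooth_def by blast
  thus ?thesis by simp
qed
lemma smooth_cont: "smooth f \<Longrightarrow> continuous_on UNIV f"
proof -
  assume a: "smooth f"
  have "Ck 0 f" using a unfolding smooth_def by blast
  thus ?thesis by simp
qed

lemma partial_mult:
  assumes "f differentiable (at x)" "g differentiable (at x)"
  shows "partial j (\<lambda>y. f y * g y) x = partial j f x * g x + f x * partial j g x"
proof -
  have "((\<lambda>y. f y * g y) has_derivative
     (\<lambda>h. f x * frechet_derivative g (at x) h + frechet_derivative f (at x) h * g x)) (at x)"
    using has_derivative_mult[OF frechet_derivative_works[THEN iffD1, OF assms(1)]
        frechet_derivative_works[THEN iffD1, OF assms(2)]] .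
  hence eq: "frechet_derivative (\<lambda>y. f y * g y) (at x) =
     (\<lambda>h. f x * frechet_derivative g (at x) h + frechet_derivative f (at x) h * g x)"
    by (rule frechet_derivative_at[symmetric])
  show ?thesis unfolding partial_def eq by (simp add: algebra_simps)
qed

lemma partial_zero_open:
  assumes "open U" "x \<in> U" "\<And>y. y \<in> U \<Longrightarrow> f y = 0"
  shows "partial i f x = 0"
proof -
  have "(f has_derivative (\<lambda>h. 0)) (at x)"
    by (rule has_derivative_transform_within_open[where f="\<lambda>y. 0" and s=U])
       (use assms in \<open>auto intro: derivative_eq_intros\<close>)
  from frechet_derivative_at[OF this] show ?thesis unfolding partial_def by metis
qed

lemma line_deriv:
  assumes "f differentiable (at (x + t *\<^sub>R e))"
  shows "((\<lambda>\<tau>. f (x + \<tau> *\<^sub>R e)) has_real_derivative frechet_derivative f (at (x + t *\<^sub>R e)) e) (at t)"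
proof -
  let ?f' = "frechet_derivative f (at (x + t *\<^sub>R e))"
  have d: "(f has_derivative ?f') (at (x + t *\<^sub>R e))"
    using frechet_derivative_works assms by blast
  have l: "linear ?f'" using has_derivative_linear[OF d] .
  have "((\<lambda>\<tau>. x + \<tau> *\<^sub>R e) has_derivative (\<lambda>d. d *\<^sub>R e)) (at t)"
    by (auto intro!: derivative_eq_intros)
  from has_derivative_compose[OF this d]
  have "((\<lambda>\<tau>. f (x + \<tau> *\<^sub>R e)) has_derivative (\<lambda>d. ?f' (d *\<^sub>R e))) (at t)" .
  moreover have "(\<lambda>d. ?f' (d *\<^sub>R e)) = (*) (?f' e)"
    using linear_scale[OF l] by (auto simp: mult.commute)
  ultimately show ?thesis by (simp add: has_field_derivative_def)
qed

lemma IBP0: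
  fixes h :: "real^3 \<Rightarrow> real"
  assumes hd: "\<And>x. h differentiable (at x)" and Dc: "continuous_on UNIV (partial j h)"
    and r: "r > 0" and hz: "\<And>x. norm x \<ge> r \<Longrightarrow> h x = 0"
  shows "partial j h integrable_on UNIV" "integral UNIV (partial j h) = 0"
proof -
  define D where "D = partial j h"
  define e :: "real^3" where "e = axis j 1"
  have ne: "norm e = 1" unfolding e_def by simp
  have Dz: "D x = 0" if "norm x > r" for x
    unfolding D_def
    by (rule partial_zero_open[where U="{y. r < norm y}"])
       (use that hz in \<open>auto intro: open_Collect_less continuous_intros\<close>)
  have hc: "continuous_on UNIV h"
    by (intro continuous_at_imp_continuous_on ballI differentiable_imp_continuous_within hd)
  have Dint: "D integrable_on UNIV" and DI: "integral UNIV D = integral (cball 0 r) D"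
    using cont_support[OF Dc[folded D_def] Dz] by auto
  show "partial j h integrable_on UNIV" using Dint D_def by simp
  define M where "M = measure lebesgue (cball (0::real^3) (r+1))"
  have M0: "M \<ge> 0" unfolding M_def by simp
  have key: "\<bar>integral UNIV D\<bar> \<le> \<epsilon> * M" if ep: "\<epsilon> > 0" for \<epsilon>
  proof -
    have "uniformly_continuous_on (cball 0 (r+2)) D"
      by (rule compact_uniformly_continuous) (auto intro: continuous_on_subset[OF Dc[folded D_def]])
    then obtain \<delta> where d0: "\<delta> > 0"
      and dd0: "\<forall>x\<in>cball 0 (r+2). \<forall>x'\<in>cball 0 (r+2). dist x' x < \<delta> \<longrightarrow> dist (D x') (D x) < \<epsilon>"
      unfolding uniformly_continuous_on_def using ep by blast
    have dd: "dist (D x') (D x) < \<epsilon>" if "x \<in> cball 0 (r+2)" "x' \<in> cball 0 (r+2)" "dist x' x < \<delta>" for x x'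
      using dd0 that by blast
    define t where "t = min (\<delta>/2) (1/2)"
    have t0: "t > 0" "t < \<delta>" "t \<le> 1/2" unfolding t_def using d0 by auto
    define g where "g x = t * D x - (h (x + t *\<^sub>R e) - h x)" for x
    have pt: "\<bar>g x\<bar> \<le> t * \<epsilon>" for x
    proof (cases "norm x \<le> r + 1")
      case True
      have "\<And>\<tau>. 0 \<le> \<tau> \<Longrightarrow> \<tau> \<le> t \<Longrightarrow> ((\<lambda>\<tau>. h (x + \<tau> *\<^sub>R e)) has_real_derivative D (x + \<tau> *\<^sub>R e)) (at \<tau>)"
        unfolding D_def partial_def e_def by (rule line_deriv[OF hd])
      from MVT2[OF t0(1) this] obtain \<xi> where xi: "0 < \<xi>" "\<xi> < t"
        "h (x + t *\<^sub>R e) - h x = t * D (x + \<xi> *\<^sub>R e)" by auto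
      have "norm (x + \<xi> *\<^sub>R e) \<le> norm x + \<xi>"
        using norm_triangle_ineq[of x "\<xi> *\<^sub>R e"] ne xi by simp
      hence m1: "x + \<xi> *\<^sub>R e \<in> cball 0 (r+2)" using True xi t0 by simp
      have m2: "x \<in> cball 0 (r+2)" using True by simp
      have "dist (x + \<xi> *\<^sub>R e) x = \<xi>" using ne xi by (simp add: dist_norm)
      hence "dist (D (x + \<xi> *\<^sub>R e)) (D x) < \<epsilon>" using dd[OF m2 m1] xi t0 by simp
      hence "\<bar>D x - D (x + \<xi> *\<^sub>R e)\<bar> \<le> \<epsilon>" by (simp add: dist_real_def)
      moreover have "g x = t * (D x - D (x + \<xi> *\<^sub>R e))"
        unfolding g_def using xi(3) by (simp add: algebra_simps)
      ultimately show ?thesis using t0 by (simp add: abs_mult)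
    next
      case False
      have "norm x \<le> norm (x + t *\<^sub>R e) + t"
        using norm_triangle_ineq4[of "x + t *\<^sub>R e" "t *\<^sub>R e"] ne t0 by simp
      hence "h (x + t *\<^sub>R e) = 0" using False t0 hz by simp
      moreover have "h x = 0" using False hz by simp
      moreover have "D x = 0" using False Dz r by simp
      ultimately show ?thesis unfolding g_def using t0 ep by simp
    qed
    have gz: "g x = 0" if "norm x > r + 1" for x
    proof -
      have "norm x \<le> norm (x + t *\<^sub>R e) + t"
        using norm_triangle_ineq4[of "x + t *\<^sub>R e" "t *\<^sub>R e"] ne t0 by simp
      hence "h (x + t *\<^sub>R e) = 0" using that t0 hz by simp
      moreover have "h x = 0" using that hz by simp
      moreover have "D x = 0" using that Dz r by simp
      ultimately show ?thesis unfolding g_def by simp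
    qed
    have hsz: "h x = 0" if "norm x > r" for x using hz that by simp
    have hsc: "continuous_on UNIV (\<lambda>x. h (x + t *\<^sub>R e))"
      by (rule continuous_on_compose2[OF hc]) (auto intro: continuous_intros)
    have hsz': "h (x + t *\<^sub>R e) = 0" if "norm x > r + 1" for x
    proof -
      have "norm x \<le> norm (x + t *\<^sub>R e) + t"
        using norm_triangle_ineq4[of "x + t *\<^sub>R e" "t *\<^sub>R e"] ne t0 by simp
      thus ?thesis using that t0 hz by simp
    qed
    have i1: "(\<lambda>x. h (x + t *\<^sub>R e)) integrable_on UNIV" using cont_support(1)[OF hsc hsz'] .
    have i2: "h integrable_on UNIV" using cont_support(1)[OF hc hsz] .
    have tr: "integral UNIV (\<lambda>x. h (x + t *\<^sub>R e)) = integral UNIV h"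
      using transl_integral[OF hc hsz] .
    have gc: "continuous_on UNIV g" unfolding g_def
      by (intro continuous_intros hsc hc Dc[folded D_def])
    have "integral UNIV g = t * integral UNIV D - (integral UNIV (\<lambda>x. h (x + t *\<^sub>R e)) - integral UNIV h)"
    proof -
      have a: "(\<lambda>x. t * D x) integrable_on UNIV" using integrable_on_mult_right[OF Dint] .
      have b: "(\<lambda>x. h (x + t *\<^sub>R e) - h x) integrable_on UNIV" using integrable_diff[OF i1 i2] .
      have "integral UNIV g = integral UNIV (\<lambda>x. t * D x) - integral UNIV (\<lambda>x. h (x + t *\<^sub>R e) - h x)"
        unfolding g_def using integral_diff[OF a b] .
      also have "\<dots> = t * integral UNIV D - (integral UNIV (\<lambda>x. h (x + t *\<^sub>R e)) - integral UNIV h)"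
        using integral_diff[OF i1 i2] integral_mult[OF Dint, of t] by simp
      finally show ?thesis .
    qed
    hence ig: "integral UNIV g = t * integral UNIV D" using tr by simp
    have a1: "integral UNIV g = integral (cball 0 (r+1)) g" using cont_support(2)[OF gc gz] .
    have a2: "\<bar>integral (cball 0 (r+1)) g\<bar> \<le> integral (cball (0::real^3) (r+1)) (\<lambda>x. t * \<epsilon>)"
    proof -
      have "cball (0::real^3) (r+1) \<in> sets lebesgue" by simp
      hence "g integrable_on cball 0 (r+1)" using cont_integrable_bounded(2)[OF gc] by blast
      moreover have "(\<lambda>x. t * \<epsilon>) integrable_on cball (0::real^3) (r+1)"
        by (rule integrable_on_const) simp
      ultimately have "norm (integral (cball 0 (r+1)) g) \<le> integral (cball (0::real^3) (r+1)) (\<lambda>x. t * \<epsilon>)"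
        by (intro integral_norm_bound_integral) (use pt in auto)
      thus ?thesis by (simp only: real_norm_def)
    qed
    have a3: "integral (cball (0::real^3) (r+1)) (\<lambda>x. t * \<epsilon>) = t * \<epsilon> * M"
    proof -
      have "cball (0::real^3) (r+1) \<in> lmeasurable" by simp
      note c1 = integrable_on_const[OF this, of "1::real"] lmeasure_integral[OF this]
      show ?thesis unfolding M_def c1(2) using integral_mult[OF c1(1), of "t * \<epsilon>"]
        by (simp only: mult_1_right)
    qed
    have "\<bar>t * integral UNIV D\<bar> = \<bar>integral (cball 0 (r+1)) g\<bar>" using ig a1 by simp
    also have "\<dots> \<le> integral (cball (0::real^3) (r+1)) (\<lambda>x. t * \<epsilon>)" by (rule a2)
    also have "\<dots> = t * \<epsilon> * M" by (rule a3)
    finally have "\<bar>t * integral UNIV D\<bar> \<le> t * (\<epsilon> * M)" by simp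
    moreover have "\<bar>t * integral UNIV D\<bar> = t * \<bar>integral UNIV D\<bar>" using t0 by (simp add: abs_mult)
    ultimately have "t * \<bar>integral UNIV D\<bar> \<le> t * (\<epsilon> * M)" by linarith
    thus ?thesis using mult_le_cancel_left_pos[OF t0(1)] by blast
  qed
  have "\<bar>integral UNIV D\<bar> = 0"
  proof (rule ccontr)
    assume "\<bar>integral UNIV D\<bar> \<noteq> 0"
    hence p: "\<bar>integral UNIV D\<bar> > 0" by simp
    define \<epsilon> where "\<epsilon> = \<bar>integral UNIV D\<bar> / (2 * (M + 1))"
    have "\<epsilon> > 0" unfolding \<epsilon>_def using p M0 by simp
    from key[OF this] have "\<bar>integral UNIV D\<bar> \<le> \<bar>integral UNIV D\<bar> / (2 * (M + 1)) * M" unfolding \<epsilon>_def .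
    also have "\<dots> < \<bar>integral UNIV D\<bar>"
    proof -
      have "M / (2*(M+1)) < 1" using M0 by (simp add: field_simps)
      from mult_strict_left_mono[OF this p]
      have "\<bar>integral UNIV D\<bar> * (M / (2*(M+1))) < \<bar>integral UNIV D\<bar>" by simp
      thus ?thesis by (simp only: times_divide_eq_left times_divide_eq_right)
    qed
    finally show False by simp
  qed
  thus "integral UNIV (partial j h) = 0" unfolding D_def by simp
qed

lemma IBP:
  fixes \<phi> g :: "real^3 \<Rightarrow> real"
  assumes s\<phi>: "smooth \<phi>" and sg: "smooth g" and R: "R > 0" and \<phi>z: "\<And>x. norm x \<ge> R \<Longrightarrow> \<phi> x = 0"
  shows "(\<lambda>x. \<phi> x * partial j g x) integrable_on UNIV"
    "(\<lambda>x. partial j \<phi> x * g x) integrable_on UNIV"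
    "integral UNIV (\<lambda>x. \<phi> x * partial j g x) = - integral UNIV (\<lambda>x. partial j \<phi> x * g x)"
proof -
  define h where "h x = \<phi> x * g x" for x
  have hd: "h differentiable (at x)" for x
    unfolding h_def using smooth_diff[OF s\<phi>] smooth_diff[OF sg] by (rule differentiable_mult)
  have ph: "partial j h = (\<lambda>x. partial j \<phi> x * g x + \<phi> x * partial j g x)"
    unfolding h_def by (rule ext) (rule partial_mult[OF smooth_diff[OF s\<phi>] smooth_diff[OF sg]])
  have c1: "continuous_on UNIV (\<lambda>x. partial j \<phi> x * g x)"
    by (intro continuous_on_mult smooth_cont[OF smooth_Suc[OF s\<phi>]] smooth_cont[OF sg])
  have c2: "continuous_on UNIV (\<lambda>x. \<phi> x * partial j g x)"
    by (intro continuous_on_mult smooth_cont[OF smooth_Suc[OF sg]] smooth_cont[OF s\<phi>])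
  have hz: "h x = 0" if "norm x \<ge> R" for x unfolding h_def using \<phi>z[OF that] by simp
  have P\<phi>z: "partial j \<phi> x = 0" if "norm x > R" for x
    by (rule partial_zero_open[where U="{y. R < norm y}"])
       (use that \<phi>z in \<open>auto intro: open_Collect_less continuous_intros\<close>)
  have z1: "partial j \<phi> x * g x = 0" if "norm x > R" for x using P\<phi>z[OF that] by simp
  have z2: "\<phi> x * partial j g x = 0" if "norm x > R" for x using \<phi>z that by simp
  have i1: "(\<lambda>x. partial j \<phi> x * g x) integrable_on UNIV" using cont_support(1)[OF c1 z1] .
  have i2: "(\<lambda>x. \<phi> x * partial j g x) integrable_on UNIV" using cont_support(1)[OF c2 z2] .
  have "integral UNIV (partial j h) = 0"
    by (rule IBP0(2)[OF hd _ R hz]) (unfold ph, intro continuous_on_add c1 c2)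
  hence "integral UNIV (\<lambda>x. partial j \<phi> x * g x) + integral UNIV (\<lambda>x. \<phi> x * partial j g x) = 0"
    unfolding ph using integral_add[OF i1 i2] by simp
  thus "integral UNIV (\<lambda>x. \<phi> x * partial j g x) = - integral UNIV (\<lambda>x. partial j \<phi> x * g x)"
    by linarith
  show "(\<lambda>x. \<phi> x * partial j g x) integrable_on UNIV" "(\<lambda>x. partial j \<phi> x * g x) integrable_on UNIV"
    using i1 i2 by auto
qed

lemma young_pt:
  fixes s l u :: real
  assumes s: "s > 1" and l: "l > 0" and u: "u \<ge> 0"
  shows "u \<le> l powr (1 - s) / s * u powr s + (1 - 1/s) * l"
proof -
  define q where "q = s / (s - 1)"
  have q1: "q > 1" unfolding q_def using s by (simp add: field_simps)
  have pq: "1/s + 1/q = 1" unfolding q_def using s by (simp add: field_simps)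
  have "(u / l) * 1 \<le> (u / l) powr s / s + 1 powr q / q"
    by (rule Youngs_inequality[OF s q1 pq]) (use u l in auto)
  hence "u / l \<le> (u powr s / l powr s) / s + (1 - 1/s)"
    using pq by (simp add: powr_divide u l less_imp_le)
  hence "l * (u / l) \<le> l * ((u powr s / l powr s) / s + (1 - 1/s))"
    by (rule mult_left_mono[OF _ less_imp_le[OF l]])
  also have "l * ((u powr s / l powr s) / s + (1 - 1/s)) = (l / l powr s) / s * u powr s + (1 - 1/s) * l"
    by (simp add: field_simps)
  also have "l / l powr s = l powr (1 - s)"
    using l by (simp add: powr_diff)
  finally show ?thesis using l by simp
qed

lemma young_int:
  fixes f :: "real^3 \<Rightarrow> real"
  assumes fc: "continuous_on UNIV f" and f0: "\<And>x. f x \<ge> 0" and R: "R > 0"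
    and s: "s > 1" and l: "l > 0"
    and m: "m = measure lebesgue (ball (0::real^3) R)" and m0: "m > 0"
    and H: "((1 / m) * integral (ball 0 R) (\<lambda>x. f x powr s)) powr (1 / s) \<le> l"
  shows "integral (ball 0 R) f \<le> l * m"
proof -
  have bs: "ball (0::real^3) R \<in> sets lebesgue" by simp
  have bsub: "ball (0::real^3) R \<subseteq> cball 0 R" by auto
  have fsc: "continuous_on UNIV (\<lambda>x. f x powr s)"
    by (rule continuous_on_powr') (use fc f0 s in \<open>auto intro: continuous_intros\<close>)
  have fi: "f integrable_on ball 0 R" using cont_integrable_bounded(2)[OF fc bs bsub] .
  have fsi: "(\<lambda>x. f x powr s) integrable_on ball 0 R" using cont_integrable_bounded(2)[OF fsc bs bsub] .
  define X where "X = (1 / m) * integral (ball 0 R) (\<lambda>x. f x powr s)"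
  have X0: "X \<ge> 0" unfolding X_def using m0 integral_nonneg[OF fsi] by simp
  have "(X powr (1/s)) powr s = X powr (1/s * s)" by (rule powr_powr)
  also have "1/s * s = 1" using s by simp
  also have "X powr 1 = X" using X0 by simp
  finally have XX: "X = (X powr (1/s)) powr s" by simp
  have HX: "X powr (1/s) \<le> l" using H unfolding X_def .
  have "X = (X powr (1/s)) powr s" by (rule XX)
  also have "\<dots> \<le> l powr s"
    by (rule powr_mono2[OF _ _ HX]) (use s in auto)
  finally have Xl: "X \<le> l powr s" .
  have IX: "integral (ball 0 R) (\<lambda>x. f x powr s) = m * X" unfolding X_def using m0 by (simp add: field_simps)
  define a where "a = l powr (1 - s) / s"
  define b where "b = (1 - 1/s) * l"
  have a0: "a \<ge> 0" unfolding a_def using s by simp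
  have pt: "f x \<le> a * f x powr s + b" for x
    unfolding a_def b_def using young_pt[OF s l f0[of x]] .
  have ci: "(\<lambda>x. b) integrable_on ball (0::real^3) R" by (rule integrable_on_const) simp
  have ai: "(\<lambda>x. a * f x powr s) integrable_on ball 0 R" using integrable_on_mult_right[OF fsi] .
  have "integral (ball 0 R) f \<le> integral (ball 0 R) (\<lambda>x. a * f x powr s + b)"
    by (rule integral_le[OF fi integrable_add[OF ai ci]]) (use pt in auto)
  also have "\<dots> = integral (ball 0 R) (\<lambda>x. a * f x powr s) + integral (ball (0::real^3) R) (\<lambda>x. b)"
    by (rule integral_add[OF ai ci])
  also have "integral (ball 0 R) (\<lambda>x. a * f x powr s) = a * integral (ball 0 R) (\<lambda>x. f x powr s)"
    by (rule integral_mult[OF fsi, symmetric])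
  also have "integral (ball (0::real^3) R) (\<lambda>x. b) = b * m"
  proof -
    have "ball (0::real^3) R \<in> lmeasurable" by simp
    note c1 = integrable_on_const[OF this, of "1::real"] lmeasure_integral[OF this]
    show ?thesis unfolding m c1(2) using integral_mult[OF c1(1), of b]
      by (simp only: mult_1_right)
  qed
  also have "a * integral (ball 0 R) (\<lambda>x. f x powr s) \<le> a * (m * l powr s)"
    unfolding IX using Xl m0 a0 by (simp add: mult_left_mono)
  hence "a * integral (ball 0 R) (\<lambda>x. f x powr s) + b * m \<le> a * (m * l powr s) + b * m" by simp
  also have "a * (m * l powr s) = m * l / s"
  proof -
    have e: "l powr (1 - s) * l powr s = l" using l by (simp add: powr_add[symmetric])
    have "a * (m * l powr s) = m * (l powr (1 - s) * l powr s) / s" unfolding a_def by (simp add: mult_ac)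
    thus ?thesis unfolding e .
  qed
  also have "m * l / s + b * m = l * m" unfolding b_def using s by (simp add: field_simps)
  finally show ?thesis .
qed

lemma mv_bound:
  fixes A :: "real^3^3" and v :: "real^3"
  shows "norm (A *v v) \<le> 9 * norm A * norm v"
proof -
  have "\<bar>A $ i $ j\<bar> \<le> norm A" for i j
    using component_le_norm_cart[of "A $ i" j] Finite_Cartesian_Product.norm_nth_le[of A i] by linarith
  hence "onorm ((*v) A) \<le> real CARD(3) * real CARD(3) * norm A"
    by (rule onorm_le_matrix_component)
  hence o: "onorm ((*v) A) \<le> 9 * norm A" by simp
  have "norm (A *v v) \<le> onorm ((*v) A) * norm v"
    by (rule onorm) simp
  also have "\<dots> \<le> 9 * norm A * norm v" using o by (simp add: mult_right_mono)
  finally show ?thesis .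
qed

lemma main_bound:
  fixes s C1 C2 c R :: real and B :: "real^3 \<Rightarrow> real^3" and \<Psi> :: "real^3 \<Rightarrow> real^3^3"
    and \<phi> :: "real^3 \<Rightarrow> real"
  assumes s3: "3 < s" and s6: "s \<le> 6" and C1: "C1 > 0" and C2: "C2 > 0"
   and sB: "smooth_vf B" and sP: "smooth_mf \<Psi>" and dv: "\<forall>x. mdiv \<Psi> x = B x"
   and hyp: "\<forall>r>1. ((1 / measure lebesgue (ball (0::real^3) r)) *
              integral (ball 0 r) (\<lambda>x. norm (\<Psi> x - avg (ball 0 r) \<Psi>) powr s)) powr (1 / s)
            \<le> C1 * r powr (1/3 - 1/s)"
   and R1: "R > 1" and s\<phi>: "smooth \<phi>" and supp: "closure {x. \<phi> x \<noteq> 0} \<subseteq> ball 0 R"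
   and \<phi>b: "\<forall>x. 0 \<le> \<phi> x \<and> \<phi> x \<le> 1" and c0: "c > 0"
   and I\<phi>: "integral (ball 0 R) (\<lambda>x. \<bar>\<phi> x\<bar>) \<ge> c * measure lebesgue (ball (0::real^3) R)"
   and gb: "\<forall>x. norm (grad \<phi> x) \<le> C2 / R"
  shows "norm (wavg \<phi> B) \<le> (9 * C1 * C2) / c * R powr (-(2/3) - 1/s)"
proof -
  have s1: "s > 1" using s3 by simp
  have R0: "R > 0" using R1 by simp
  define A where "A = avg (ball 0 R) \<Psi>"
  define mB where "mB = measure lebesgue (ball (0::real^3) R)"
  have mB0: "mB > 0" unfolding mB_def using content_ball_pos[OF R0, of "0::real^3"] by simp
  define S where "S = {x. \<phi> x \<noteq> 0}"
  have supp': "closure S \<subseteq> ball 0 R" using supp unfolding S_def .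
  have \<phi>z: "\<phi> x = 0" if "norm x \<ge> R" for x
  proof -
    have "x \<notin> ball 0 R" using that by simp
    hence "x \<notin> closure S" by (rule contra_subsetD[OF supp'])
    hence "x \<notin> S" by (rule contra_subsetD[OF closure_subset])
    thus ?thesis unfolding S_def by simp
  qed
  have oU: "open (- closure S)" by (rule open_Compl) (rule closed_closure)
  have Pz: "partial j \<phi> x = 0" if "x \<notin> ball 0 R" for x j
  proof (rule partial_zero_open[OF oU])
    have "x \<notin> closure S" using that by (rule contra_subsetD[OF supp'])
    thus "x \<in> - closure S" by simp
    show "\<phi> y = 0" if "y \<in> - closure S" for y
    proof -
      have "y \<notin> closure S" using that by simp
      hence "y \<notin> S" by (rule contra_subsetD[OF closure_subset])
      thus ?thesis unfolding S_def by simp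
    qed
  qed
  have gz: "grad \<phi> x = 0" if "x \<notin> ball 0 R" for x
    unfolding grad_def by (simp add: vec_eq_iff Pz[OF that])
  have sPij: "smooth (\<lambda>x. \<Psi> x $ i $ j)" for i j using sP unfolding smooth_mf_def by blast
  have sBi: "smooth (\<lambda>x. B x $ i)" for i using sB unfolding smooth_vf_def by blast
  have c\<phi>: "continuous_on UNIV \<phi>" by (rule smooth_cont[OF s\<phi>])
  have cP\<phi>: "continuous_on UNIV (partial j \<phi>)" for j by (rule smooth_cont[OF smooth_Suc[OF s\<phi>]])
  have cPsi: "continuous_on UNIV (\<lambda>x. \<Psi> x $ i $ j)" for i j by (rule smooth_cont[OF sPij])
  have cB: "continuous_on UNIV B"
  proof -
    have "continuous_on UNIV (\<lambda>x. \<chi> i. B x $ i)"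
      by (intro continuous_on_vec_lambda smooth_cont[OF sBi])
    thus ?thesis by simp
  qed
  have cP: "continuous_on UNIV \<Psi>"
  proof -
    have "continuous_on UNIV (\<lambda>x. \<chi> i. \<chi> j. \<Psi> x $ i $ j)"
      by (intro continuous_on_vec_lambda cPsi)
    thus ?thesis by simp
  qed
  define F where "F x = \<phi> x *\<^sub>R B x" for x
  have cF: "continuous_on UNIV F" unfolding F_def by (intro continuous_on_scaleR c\<phi> cB)
  have Fz: "F x = 0" if "norm x > R" for x unfolding F_def using \<phi>z that by simp
  have iF: "F integrable_on UNIV" using cont_support(1)[OF cF Fz] .
  define G where "G x = (\<Psi> x - A) *v grad \<phi> x" for x
  have Gform: "G = (\<lambda>x. \<chi> i. \<Sum>j\<in>UNIV. (\<Psi> x $ i $ j - A $ i $ j) * partial j \<phi> x)"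
    by (rule ext) (simp add: G_def vec_eq_iff matrix_vector_mult_def grad_def)
  have cG: "continuous_on UNIV G" unfolding Gform
    by (intro continuous_on_vec_lambda continuous_on_sum continuous_on_mult continuous_on_diff
        cPsi cP\<phi> continuous_on_const)
  have Gz: "G x = 0" if "norm x > R" for x
  proof -
    have "x \<notin> ball 0 R" using that by simp
    thus ?thesis unfolding G_def using gz by simp
  qed
  have iG: "G integrable_on UNIV" using cont_support(1)[OF cG Gz] .
  have \<phi>z': "\<And>x. norm x \<ge> R \<Longrightarrow> \<phi> x = 0" using \<phi>z by blast
  note ibp = IBP[OF s\<phi> sPij R0 \<phi>z']
  have D0: "integral UNIV (partial j \<phi>) = 0" for j
    by (rule IBP0(2)[OF smooth_diff[OF s\<phi>] cP\<phi> R0 \<phi>z'])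
  have Di: "partial j \<phi> integrable_on UNIV" for j
    by (rule IBP0(1)[OF smooth_diff[OF s\<phi>] cP\<phi> R0 \<phi>z'])
  have Vi: "integral UNIV F $ i = - (\<Sum>j\<in>UNIV. integral UNIV (\<lambda>x. partial j \<phi> x * \<Psi> x $ i $ j))" for i
  proof -
    have "integral UNIV F $ i = integral UNIV (\<lambda>x. F x $ i)"
      by (rule integral_component_eq_cart[OF iF, symmetric])
    also have "(\<lambda>x. F x $ i) = (\<lambda>x. \<Sum>j\<in>UNIV. \<phi> x * partial j (\<lambda>y. \<Psi> y $ i $ j) x)"
    proof (rule ext)
      fix x
      have "B x $ i = mdiv \<Psi> x $ i" using dv by simp
      also have "\<dots> = (\<Sum>j\<in>UNIV. partial j (\<lambda>y. \<Psi> y $ i $ j) x)" unfolding mdiv_def by simp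
      finally show "F x $ i = (\<Sum>j\<in>UNIV. \<phi> x * partial j (\<lambda>y. \<Psi> y $ i $ j) x)"
        unfolding F_def by (simp add: sum_distrib_left)
    qed
    also have "integral UNIV \<dots> = (\<Sum>j\<in>UNIV. integral UNIV (\<lambda>x. \<phi> x * partial j (\<lambda>y. \<Psi> y $ i $ j) x))"
      by (rule integral_sum) (use ibp(1) in auto)
    also have "\<dots> = (\<Sum>j\<in>UNIV. - integral UNIV (\<lambda>x. partial j \<phi> x * \<Psi> x $ i $ j))"
      by (rule sum.cong[OF refl]) (rule ibp(3))
    also have "\<dots> = - (\<Sum>j\<in>UNIV. integral UNIV (\<lambda>x. partial j \<phi> x * \<Psi> x $ i $ j))"
      by (simp add: sum_negf)
    finally show ?thesis .
  qed
  have Wi: "integral UNIV G $ i = (\<Sum>j\<in>UNIV. integral UNIV (\<lambda>x. partial j \<phi> x * \<Psi> x $ i $ j))" for i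
  proof -
    have "integral UNIV G $ i = integral UNIV (\<lambda>x. G x $ i)"
      by (rule integral_component_eq_cart[OF iG, symmetric])
    also have "(\<lambda>x. G x $ i) = (\<lambda>x. \<Sum>j\<in>UNIV. (\<Psi> x $ i $ j - A $ i $ j) * partial j \<phi> x)"
      unfolding Gform by simp
    also have "(\<lambda>x. \<Sum>j\<in>UNIV. (\<Psi> x $ i $ j - A $ i $ j) * partial j \<phi> x) =
        (\<lambda>x. \<Sum>j\<in>UNIV. partial j \<phi> x * \<Psi> x $ i $ j - A $ i $ j * partial j \<phi> x)"
      by (simp add: algebra_simps)
    also have "integral UNIV \<dots> = (\<Sum>j\<in>UNIV. integral UNIV (\<lambda>x. partial j \<phi> x * \<Psi> x $ i $ j - A $ i $ j * partial j \<phi> x))"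
      by (rule integral_sum) (auto intro!: integrable_diff ibp(2) integrable_on_mult_right Di)
    also have "\<dots> = (\<Sum>j\<in>UNIV. integral UNIV (\<lambda>x. partial j \<phi> x * \<Psi> x $ i $ j))"
    proof (rule sum.cong[OF refl])
      fix j
      have "integral UNIV (\<lambda>x. partial j \<phi> x * \<Psi> x $ i $ j - A $ i $ j * partial j \<phi> x)
          = integral UNIV (\<lambda>x. partial j \<phi> x * \<Psi> x $ i $ j) - integral UNIV (\<lambda>x. A $ i $ j * partial j \<phi> x)"
        by (rule integral_diff[OF ibp(2) integrable_on_mult_right[OF Di]])
      also have "integral UNIV (\<lambda>x. A $ i $ j * partial j \<phi> x) = A $ i $ j * integral UNIV (partial j \<phi>)"
        by (rule integral_mult[OF Di, symmetric])
      also have "\<dots> = 0" using D0 by simp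
      finally show "integral UNIV (\<lambda>x. partial j \<phi> x * \<Psi> x $ i $ j - A $ i $ j * partial j \<phi> x)
          = integral UNIV (\<lambda>x. partial j \<phi> x * \<Psi> x $ i $ j)" by simp
    qed
    finally show ?thesis .
  qed
  have VW: "integral UNIV F = - integral UNIV G"
    by (simp add: vec_eq_iff Vi Wi)
  define l where "l = C1 * R powr (1/3 - 1/s)"
  have l0: "l > 0" unfolding l_def using C1 R0 by simp
  define f where "f x = norm (\<Psi> x - A)" for x
  have cf: "continuous_on UNIV f" unfolding f_def by (intro continuous_intros cP)
  have bs: "ball (0::real^3) R \<in> sets lebesgue" by simp
  have bsub: "ball (0::real^3) R \<subseteq> cball 0 R" by auto
  have fi: "f integrable_on ball 0 R" using cont_integrable_bounded(2)[OF cf bs bsub] .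
  have Hf: "((1 / mB) * integral (ball 0 R) (\<lambda>x. f x powr s)) powr (1 / s) \<le> l"
    using hyp[rule_format, OF R1] unfolding mB_def f_def A_def l_def .
  have yf: "integral (ball 0 R) f \<le> l * mB"
    by (rule young_int[OF cf _ R0 s1 l0 mB_def mB0 Hf]) (simp add: f_def)
  define g where "g x = (if x \<in> ball 0 R then 9 * C2 / R * f x else 0)" for x
  have fi2: "(\<lambda>x. 9 * C2 / R * f x) integrable_on ball 0 R" using integrable_on_mult_right[OF fi] .
  have ig: "g integrable_on UNIV" unfolding g_def using fi2 by (simp only: integrable_restrict_UNIV)
  have nG: "norm (G x) \<le> g x" for x
  proof (cases "x \<in> ball 0 R")
    case True
    have "norm (G x) \<le> 9 * norm (\<Psi> x - A) * norm (grad \<phi> x)" unfolding G_def by (rule mv_bound)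
    also have "\<dots> \<le> 9 * norm (\<Psi> x - A) * (C2 / R)"
      using gb by (intro mult_left_mono) auto
    also have "9 * norm (\<Psi> x - A) * (C2 / R) = 9 * C2 / R * f x" unfolding f_def by simp
    finally show ?thesis using True unfolding g_def by simp
  next
    case False
    thus ?thesis unfolding g_def G_def using gz by simp
  qed
  have "norm (integral UNIV G) \<le> integral UNIV g"
    by (rule integral_norm_bound_integral[OF iG ig]) (use nG in auto)
  also have "integral UNIV g = integral (ball 0 R) (\<lambda>x. 9 * C2 / R * f x)"
    unfolding g_def by (rule integral_restrict_UNIV)
  also have "\<dots> = 9 * C2 / R * integral (ball 0 R) f"
    by (rule integral_mult[OF fi, symmetric])
  also have "\<dots> \<le> 9 * C2 / R * (l * mB)"
    using yf C2 R0 by (intro mult_left_mono) auto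
  finally have nW: "norm (integral UNIV G) \<le> 9 * C2 / R * (l * mB)" .
  have \<phi>eq: "\<phi> = (\<lambda>x. if x \<in> ball 0 R then \<bar>\<phi> x\<bar> else 0)"
  proof (rule ext)
    fix x show "\<phi> x = (if x \<in> ball 0 R then \<bar>\<phi> x\<bar> else 0)"
      using \<phi>b \<phi>z[of x] by (cases "x \<in> ball 0 R") auto
  qed
  have I\<phi>eq: "integral UNIV \<phi> = integral (ball 0 R) (\<lambda>x. \<bar>\<phi> x\<bar>)"
    by (subst \<phi>eq) (rule integral_restrict_UNIV)
  define I where "I = integral UNIV \<phi>"
  have Ic: "I \<ge> c * mB" unfolding I_def I\<phi>eq mB_def using I\<phi> .
  have cm0: "c * mB > 0" using c0 mB0 by simp
  have I0: "I > 0" using Ic cm0 by linarith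
  have "wavg \<phi> B = (1 / I) *\<^sub>R integral UNIV F" unfolding wavg_def I_def F_def ..
  hence "norm (wavg \<phi> B) = norm (integral UNIV G) / I"
    using I0 VW by simp
  also have "\<dots> \<le> norm (integral UNIV G) / (c * mB)"
    by (rule divide_left_mono[OF Ic]) (use cm0 I0 in auto)
  also have "\<dots> \<le> 9 * C2 / R * (l * mB) / (c * mB)"
    by (rule divide_right_mono[OF nW]) (use cm0 in auto)
  also have "\<dots> = 9 * C2 * C1 / c * (R powr (1/3 - 1/s) / R)"
    unfolding l_def using mB0 c0 R0 by (simp add: field_simps)
  also have "R powr (1/3 - 1/s) / R = R powr (-(2/3) - 1/s)"
  proof -
    have "R powr (-(2/3) - 1/s) = R powr ((1/3 - 1/s) - 1)" by simp
    also have "\<dots> = R powr (1/3 - 1/s) / R powr 1" by (rule powr_diff)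
    also have "R powr 1 = R" using R0 by simp
    finally show ?thesis by simp
  qed
  finally show ?thesis by (simp add: mult_ac)
qed

theorem lemma2p3:
  fixes s C1 C2 :: real
  assumes "3 < s" and "s \<le> 6" and "C1 > 0" and "C2 > 0"
  shows "\<exists>K. \<forall>(c::real) (B::real^3 \<Rightarrow> real^3) (\<Psi>::real^3 \<Rightarrow> real^3^3) (R::real) (\<phi>::real^3 \<Rightarrow> real).
     smooth_vf B \<and> smooth_mf \<Psi> \<and> (\<forall>x. mdiv \<Psi> x = B x) \<and>
     (\<forall>r>1. ((1 / measure lebesgue (ball (0::real^3) r)) *
              integral (ball 0 r) (\<lambda>x. norm (\<Psi> x - avg (ball 0 r) \<Psi>) powr s)) powr (1 / s)
            \<le> C1 * r powr (1/3 - 1/s)) \<and>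
     R > 1 \<and> smooth \<phi> \<and> closure {x. \<phi> x \<noteq> 0} \<subseteq> ball 0 R \<and>
     (\<forall>x. 0 \<le> \<phi> x \<and> \<phi> x \<le> 1) \<and> c > 0 \<and>
     integral (ball 0 R) (\<lambda>x. \<bar>\<phi> x\<bar>) \<ge> c * measure lebesgue (ball (0::real^3) R) \<and>
     (\<forall>x. norm (grad \<phi> x) \<le> C2 / R)
     \<longrightarrow> norm (wavg \<phi> B) \<le> K / c * R powr (-(2/3) - 1/s)"
  apply (rule exI[of _ "9 * C1 * C2"])
  apply (intro allI impI)
  apply (elim conjE)
  apply (rule main_bound[OF assms])
  apply assumption+
  done

end
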